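(* Let $x\in\mathcal X$, $\mathbb P\in\mathcal P^o$, and let $K=2\sup_{x'\in\mathcal X}\max_{i\in\Sigma}|\ell(x',i)|$. For all $T\in\mathbb N$, $$\mathbb P^\infty\Big(c(x,\mathbb P)\le\hat c_{\mathrm V}(x,\hat{\mathbb P}_T,T)+\tfrac{7K}{3}\tfrac{a_T}{T}\Big)\ge1-2e^{-a_T},$$ $$\mathbb P^\infty\Big(c(x,\mathbb P)\ge\hat c_{\mathrm V}(x,\hat{\mathbb P}_T,T)-\sqrt{\tfrac{8a_T}{T}\mathrm{Var}_{\mathbb P}(\ell(x,\xi))}-\tfrac{7K}{3}\tfrac{a_T}{T}\Big)\ge1-2e^{-a_T}.$$
   Context: $\Sigma=\{1,\dots,d\}$ is finite, $\mathcal P$ the probability simplex, $\mathcal P^o$ its relative interior. $\mathcal X\subset\mathbb R^n$ is compact, $\ell:\mathcal X\times\Sigma\to\mathbb R$ continuous in $x$. $c(x,\mathbb P)=\sum_i\ell(x,i)\mathbb P(i)$, $\mathrm{Var}_{\mathbb P}(\ell(x,\xi))=\sum_i\mathbb P(i)(\ell(x,i)-c(x,\mathbb P))^2$. Data $\xi_1,\xi_2,\dots$ are i.i.d. with law $\mathbb P$, $\mathbb P^\infty$ their joint law, $\hat{\mathbb P}_T(i)=\frac1T\sum_{t\le T}\mathbf 1\{\xi_t=i\}$. $(a_T)$ is a sequence of positive reals. SVP predictor: $\hat c_{\mathrm V}(x,\mathbb Q,T)=c(x,\mathbb Q)+\sqrt{\frac{2a_T}{T}\mathrm{Var}_{\mathbb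 Q}(\ell(x,\xi))}$ for $\mathbb Q\in\mathcal P$. *)

theory Defs
  imports "HOL-Probability.Probability"
begin

text \<open>Sigma is modelled as a finite type 's; a distribution Q on Sigma as a function 's => real.\<close>

definition cost :: "('x \<Rightarrow> 's::finite \<Rightarrow> real) \<Rightarrow> 'x \<Rightarrow> ('s \<Rightarrow> real) \<Rightarrow> real" where
  "cost L x Q = (\<Sum>i\<in>UNIV. L x i * Q i)"

definition var :: "('x \<Rightarrow> 's::finite \<Rightarrow> real) \<Rightarrow> 'x \<Rightarrow> ('s \<Rightarrow> real) \<Rightarrow> real" where
  "var L x Q = (\<Sum>i\<in>UNIV. Q i * (L x i - cost L x Q)\<^sup>2)"

text \<open>Empirical distribution of xi_1, ..., xi_T (coordinate 0 of the sample path is unused).\<close>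
definition emp :: "nat \<Rightarrow> (nat \<Rightarrow> 's) \<Rightarrow> 's \<Rightarrow> real" where
  "emp T \<omega> i = real (card {t\<in>{1..T}. \<omega> t = i}) / real T"

definition svp :: "(nat \<Rightarrow> real) \<Rightarrow> ('x \<Rightarrow> 's::finite \<Rightarrow> real) \<Rightarrow> 'x \<Rightarrow> ('s \<Rightarrow> real) \<Rightarrow> nat \<Rightarrow> real" where
  "svp a L x Q T = cost L x Q + sqrt (2 * a T / real T * var L x Q)"

definition Pinf :: "'s pmf \<Rightarrow> (nat \<Rightarrow> 's) measure" where
  "Pinf P = PiM UNIV (\<lambda>_::nat. measure_pmf P)"

end

theory Submission
  imports Defs
begin

lemma exp_aux:
  fixes x :: real assumes "x < 3"
  shows "exp x * (6 - 2*x) \<le> x^2 + 4*x + 6"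
proof -
  define h where "h = (\<lambda>x::real. x^2 + 4*x + 6 - exp x * (6 - 2*x))"
  define h1 where "h1 = (\<lambda>x::real. 2*x + 4 - exp x * (4 - 2*x))"
  define h2 where "h2 = (\<lambda>x::real. 2 - exp x * (2 - 2*x))"
  have d0: "\<And>x. (h has_real_derivative h1 x) (at x)"
    unfolding h_def h1_def by (auto intro!: derivative_eq_intros simp: algebra_simps)
  have d1: "\<And>x. (h1 has_real_derivative h2 x) (at x)"
    unfolding h1_def h2_def by (auto intro!: derivative_eq_intros simp: algebra_simps)
  have d2: "\<And>x. (h2 has_real_derivative (2 * x * exp x)) (at x)"
    unfolding h2_def by (auto intro!: derivative_eq_intros simp: algebra_simps)
  have h2pos: "h2 y \<ge> 0" for y
  proof (cases "y \<ge> 0")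
    case True
    have "h2 0 \<le> h2 y"
      by (rule DERIV_nonneg_imp_nondecreasing[OF True]) (use d2 in \<open>auto intro!: exI\<close>)
    then show ?thesis by (simp add: h2_def)
  next
    case False
    have "h2 0 \<le> h2 y"
      by (rule DERIV_nonpos_imp_nonincreasing[of y 0]) (use False d2 in \<open>auto intro!: exI simp: mult_nonpos_nonneg\<close>)
    then show ?thesis by (simp add: h2_def)
  qed
  have h1s: "(y \<ge> 0 \<longrightarrow> h1 y \<ge> 0) \<and> (y \<le> 0 \<longrightarrow> h1 y \<le> 0)" for y
  proof -
    have m: "h1 a \<le> h1 b" if "a \<le> b" for a b
      using that by (rule DERIV_nonneg_imp_nondecreasing[of a b h1]) (meson d1 h2pos)
    show ?thesis using m[of 0 y] m[of y 0] by (auto simp: h1_def)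
  qed
  have "h 0 \<le> h x"
  proof (cases "x \<ge> 0")
    case True
    show ?thesis
      by (rule DERIV_nonneg_imp_nondecreasing[OF True]) (meson d0 h1s)
  next
    case False
    show ?thesis
      by (rule DERIV_nonpos_imp_nonincreasing[of x 0]) (use False d0 h1s in \<open>auto\<close>)
  qed
  then show ?thesis by (simp add: h_def)
qed

lemma exp_aux2:
  fixes x y :: real assumes "x \<le> y" "y < 3"
  shows "exp x \<le> 1 + x + x^2 * 3 / (6 - 2*y)"
proof -
  have e: "exp x * (6 - 2*x) \<le> x^2 + 4*x + 6" using exp_aux assms by simp
  have p: "6 - 2*x > 0" using assms by simp
  have "exp x \<le> (x^2 + 4*x + 6) / (6 - 2*x)"
    using e p by (simp add: pos_le_divide_eq)
  also have "\<dots> = 1 + x + x^2 * 3 / (6 - 2*x)"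
    using p by (simp add: field_simps power2_eq_square)
  also have "x^2 * 3 / (6 - 2*x) \<le> x^2 * 3 / (6 - 2*y)"
    using assms by (intro divide_left_mono) (auto intro: mult_pos_pos)
  finally show ?thesis by simp
qed

lemma mgf_bound:
  fixes p f :: "'s::finite \<Rightarrow> real"
  assumes p0: "\<And>i. p i \<ge> 0" and p1: "sum p UNIV = 1" and m0: "(\<Sum>i\<in>UNIV. p i * f i) = 0"
    and fb: "\<And>i. f i \<le> b" and fv: "(\<Sum>i\<in>UNIV. p i * (f i)^2) \<le> v" and l0: "0 \<le> l" and lb: "l*b < 3"
  shows "(\<Sum>i\<in>UNIV. p i * exp (l * f i)) \<le> exp (l^2 * v * 3 / (6 - 2*(l*b)))"
proof -
  define D where "D = 3 / (6 - 2*(l*b))"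
  have D0: "D \<ge> 0" using lb by (simp add: D_def mult.commute)
  have pt: "exp (l * f i) \<le> 1 + l * f i + l^2 * (f i)^2 * D" for i
  proof -
    have "l * f i \<le> l * b" using fb l0 by (simp add: mult_left_mono)
    from exp_aux2[OF this lb] show ?thesis by (simp add: D_def power_mult_distrib)
  qed
  have "(\<Sum>i\<in>UNIV. p i * exp (l * f i)) \<le> (\<Sum>i\<in>UNIV. p i * (1 + l * f i + l^2 * (f i)^2 * D))"
    by (intro sum_mono mult_left_mono pt p0)
  also have "\<dots> = sum p UNIV + l * (\<Sum>i\<in>UNIV. p i * f i) + l^2 * D * (\<Sum>i\<in>UNIV. p i * (f i)^2)"
    by (simp add: algebra_simps sum.distrib sum_distrib_left)
  also have "\<dots> = 1 + l^2 * D * (\<Sum>i\<in>UNIV. p i * (f i)^2)"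
    using p1 m0 by simp
  also have "\<dots> \<le> 1 + l^2 * D * v"
    using fv D0 by (simp add: mult_left_mono)
  also have "\<dots> \<le> exp (l^2 * D * v)"
    by (rule exp_ge_add_one_self)
  finally show ?thesis by (simp add: D_def mult.commute mult.left_commute)
qed
lemma space_N: "space (PiM J (\<lambda>_. measure_pmf (P::'s pmf))) = PiE J (\<lambda>_. UNIV)"
  by (simp add: space_PiM)

lemma finite_space_N: "finite J \<Longrightarrow> finite (space (PiM J (\<lambda>_. measure_pmf (P::'s::finite pmf))))"
  by (simp add: space_N finite_PiE)

lemma sets_N:
  assumes J: "finite J" and S: "S \<subseteq> space (PiM J (\<lambda>_. measure_pmf (P::'s::finite pmf)))"
  shows "S \<in> sets (PiM J (\<lambda>_. measure_pmf P))"
proof -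
  have fS: "finite S" using finite_space_N[OF J] S by (rule finite_subset[rotated])
  have eq: "S = (\<Union>h\<in>S. PiE J (\<lambda>t. {h t}))"
  proof
    show "S \<subseteq> (\<Union>h\<in>S. PiE J (\<lambda>t. {h t}))"
    proof
      fix h assume h: "h \<in> S"
      then have "h \<in> PiE J (\<lambda>_. UNIV)" using S by (auto simp: space_N)
      then have "h \<in> PiE J (\<lambda>t. {h t})" by (auto simp: PiE_iff)
      then show "h \<in> (\<Union>h\<in>S. PiE J (\<lambda>t. {h t}))" using h by blast
    qed
  next
    show "(\<Union>h\<in>S. PiE J (\<lambda>t. {h t})) \<subseteq> S"
    proof
      fix g assume "g \<in> (\<Union>h\<in>S. PiE J (\<lambda>t. {h t}))"
      then obtain h where h: "h \<in> S" "g \<in> PiE J (\<lambda>t. {h t})" by blast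
      have "h \<in> PiE J (\<lambda>_. UNIV)" using S h by (auto simp: space_N)
      then have "g = h" using h(2) by (auto simp: PiE_iff extensional_def fun_eq_iff)
      then show "g \<in> S" using h by simp
    qed
  qed
  have "(\<Union>h\<in>S. PiE J (\<lambda>t. {h t})) \<in> sets (PiM J (\<lambda>_. measure_pmf P))"
    using fS by (intro sets.finite_UN sets_PiM_I_finite J) auto
  then show ?thesis using eq by simp
qed

lemma meas_N:
  assumes J: "finite J"
  shows "(g :: _ \<Rightarrow> real) \<in> borel_measurable (PiM J (\<lambda>_. measure_pmf (P::'s::finite pmf)))"
  by (rule measurableI) (auto intro!: sets_N J)

lemma int_N:
  assumes J: "finite J"
  shows "integrable (PiM J (\<lambda>_. measure_pmf (P::'s::finite pmf))) (g :: _ \<Rightarrow> real)"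
proof -
  interpret prob_space "PiM J (\<lambda>_. measure_pmf P)"
    by (intro prob_space_PiM measure_pmf.prob_space_axioms)
  let ?B = "Max ((\<lambda>y. norm (g y)) ` space (PiM J (\<lambda>_. measure_pmf P)))"
  show ?thesis
  proof (rule integrable_const_bound[where B = ?B])
    show "AE x in PiM J (\<lambda>_. measure_pmf P). norm (g x) \<le> ?B"
      by (intro AE_I2 Max_ge finite_imageI finite_space_N J) auto
  qed (rule meas_N[OF J])
qed

lemma transfer_N:
  assumes J: "finite (J::nat set)"
  shows "measure (Pinf P) {\<omega>\<in>space (Pinf P). R (restrict \<omega> J)} =
         measure (PiM J (\<lambda>_. measure_pmf (P::'s::finite pmf))) {y\<in>space (PiM J (\<lambda>_. measure_pmf P)). R y}"
proof -
  interpret product_prob_space "\<lambda>_::nat. measure_pmf P" UNIV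
    by (intro product_prob_spaceI measure_pmf.prob_space_axioms)
  have d: "distr (Pinf P) (PiM J (\<lambda>_. measure_pmf P)) (\<lambda>x. restrict x J) = PiM J (\<lambda>_. measure_pmf P)"
    unfolding Pinf_def by (rule distr_PiM_restrict_finite[OF J]) simp
  have m: "(\<lambda>x. restrict x J) \<in> measurable (Pinf P) (PiM J (\<lambda>_. measure_pmf P))"
    unfolding Pinf_def by (rule measurable_restrict_subset) simp
  have "measure (PiM J (\<lambda>_. measure_pmf P)) {y\<in>space (PiM J (\<lambda>_. measure_pmf P)). R y}
      = measure (distr (Pinf P) (PiM J (\<lambda>_. measure_pmf P)) (\<lambda>x. restrict x J)) {y\<in>space (PiM J (\<lambda>_. measure_pmf P)). R y}"
    by (simp add: d)
  also have "\<dots> = measure (Pinf P) ((\<lambda>x. restrict x J) -` {y\<in>space (PiM J (\<lambda>_. measure_pmf P)). R y} \<inter> space (Pinf P))"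
    by (rule measure_distr[OF m]) (intro sets_N J, auto)
  also have "(\<lambda>x. restrict x J) -` {y\<in>space (PiM J (\<lambda>_. measure_pmf P)). R y} \<inter> space (Pinf P)
      = {\<omega>\<in>space (Pinf P). R (restrict \<omega> J)}"
    by (auto simp: space_N)
  finally show ?thesis by simp
qed

lemma prod_integral_N:
  assumes J: "finite (J::nat set)"
  shows "integral\<^sup>L (PiM J (\<lambda>_. measure_pmf (P::'s::finite pmf))) (\<lambda>y. \<Prod>t\<in>J. g (y t))
     = (\<Sum>i\<in>UNIV. pmf P i * g i) ^ card J"
proof -
  interpret product_prob_space "\<lambda>_::nat. measure_pmf P" UNIV
    by (intro product_prob_spaceI measure_pmf.prob_space_axioms)
  have "integral\<^sup>L (PiM J (\<lambda>_. measure_pmf P)) (\<lambda>y. \<Prod>t\<in>J. g (y t)) = (\<Prod>t\<in>J. integral\<^sup>L (measure_pmf P) g)"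
    by (rule product_integral_prod[OF J, of "\<lambda>_. g"]) (simp add: integrable_measure_pmf_finite)
  also have "integral\<^sup>L (measure_pmf P) g = (\<Sum>i\<in>UNIV. pmf P i * g i)"
    by (subst integral_measure_pmf_real[where A = UNIV]) (auto simp: mult.commute)
  finally show ?thesis by simp
qed
lemma bern_alg:
  fixes qa zz c a l nn vv thr :: real
  assumes qa: "qa^2 = 2*a" and zz: "zz^2 = vv*nn" and zzp: "zz > 0" and c: "c \<ge> 0" and s2p: "qa \<ge> 0"
    and l: "l = qa / (zz + c * qa)" and thr: "thr = zz*qa + c*a"
  shows "- l * thr + nn * (l^2 * vv * 3 / (6 - 2*(l*(3*c)))) = -a"
proof -
  define D where "D = zz + c * qa"
  have Dp: "D > 0" using zzp c s2p by (simp add: D_def add_pos_nonneg)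
  have lD: "l = qa / D" using l D_def by simp
  have e1: "6 - 2*(l*(3*c)) = 6 * zz / D"
    using Dp by (simp add: lD D_def field_simps)
  have "nn * (l^2 * vv * 3 / (6 - 2*(l*(3*c)))) = nn * (l^2 * vv * 3 / (6 * zz / D))"
    by (simp only: e1)
  also have "\<dots> = (qa^2 * (vv*nn)) / (2 * zz * D)"
    using Dp zzp by (simp add: lD field_simps power2_eq_square)
  also have "qa^2 * (vv*nn) = 2*a*zz^2" by (simp add: qa zz)
  also have "(2*a*zz^2) / (2 * zz * D) = a * zz / D"
    using Dp zzp by (simp add: field_simps power2_eq_square)
  finally have e2: "nn * (l^2 * vv * 3 / (6 - 2*(l*(3*c)))) = a * zz / D" .
  have e3: "l * thr = (qa^2 * zz + c*a*qa) / D"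
    using Dp by (simp add: lD thr field_simps power2_eq_square)
  have "- l * thr + nn * (l^2 * vv * 3 / (6 - 2*(l*(3*c)))) = a * zz / D - (qa^2 * zz + c * a * qa) / D"
    using e2 e3 by linarith
  also have "\<dots> = (a * zz - (2 * a * zz + c * a * qa)) / D" using Dp by (simp add: qa field_simps)
  also have "\<dots> = -a" using Dp by (simp add: D_def field_simps)
  finally show ?thesis .
qed
lemma bernstein_N:
  fixes f :: "'s::finite \<Rightarrow> real" and J :: "nat set" and P :: "'s pmf"
  assumes J: "finite J" and pos: "\<And>i. pmf P i > 0" and m0: "(\<Sum>i\<in>UNIV. pmf P i * f i) = 0"
    and fb: "\<And>i. f i \<le> b" and fv: "(\<Sum>i\<in>UNIV. pmf P i * (f i)^2) \<le> vv" and a: "a > 0"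
  shows "measure (PiM J (\<lambda>_. measure_pmf P))
     {y\<in>space (PiM J (\<lambda>_. measure_pmf P)). (\<Sum>t\<in>J. f (y t)) > sqrt (2 * vv * card J * a) + b * a / 3}
     \<le> exp (-a)"
proof -
  let ?N = "PiM J (\<lambda>_. measure_pmf P)"
  interpret N: prob_space ?N
    by (intro prob_space_PiM measure_pmf.prob_space_axioms)
  let ?E = "{y\<in>space ?N. (\<Sum>t\<in>J. f (y t)) > sqrt (2 * vv * card J * a) + b * a / 3}"
  have v0: "0 \<le> vv" using fv by (rule order.trans[rotated]) (auto intro!: sum_nonneg simp: less_imp_le[OF pos])
  have b0: "0 \<le> b"
  proof (rule ccontr)
    assume "\<not> 0 \<le> b"
    then have "\<And>i. pmf P i * (- f i) > 0" using fb pos by (smt (verit) mult_pos_pos)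
    then have "(\<Sum>i\<in>UNIV. pmf P i * (- f i)) > 0" by (intro sum_pos) auto
    then show False using m0 by (simp add: sum_negf)
  qed
  show ?thesis
  proof (cases "vv = 0 \<or> J = {}")
    case True
    have Ee: "?E = {}"
    proof -
      have "(\<Sum>t\<in>J. f (y t)) = 0" for y
      proof (cases "J = {}")
        case False
        then have v: "vv = 0" using True by simp
        have "\<forall>i\<in>UNIV. pmf P i * (f i)^2 = 0"
          using fv v by (subst sum_nonneg_eq_0_iff[symmetric]) (auto intro!: antisym sum_nonneg simp: less_imp_le[OF pos])
        then have "\<And>i. f i = 0" using pos by (metis UNIV_I less_irrefl mult_eq_0_iff power_eq_0_iff)
        then show ?thesis by simp
      qed simp
      moreover have "sqrt (2 * vv * card J * a) + b * a / 3 \<ge> 0"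
        using b0 a v0 by (intro add_nonneg_nonneg) auto
      ultimately show ?thesis by auto
    qed
    show ?thesis unfolding Ee by simp
  next
    case False
    define nn where "nn = real (card J)"
    have nnp: "nn > 0" using False J by (simp add: nn_def card_gt_0_iff)
    define zz where "zz = sqrt (vv * nn)"
    define qa where "qa = sqrt (2 * a)"
    define c where "c = b / 3"
    define l where "l = qa / (zz + c * qa)"
    define thr where "thr = zz * qa + c * a"
    have vp: "vv > 0" using False v0 by simp
    have zzp: "zz > 0" using vp nnp by (simp add: zz_def)
    have qa0: "qa \<ge> 0" using a by (simp add: qa_def)
    have c0: "c \<ge> 0" using b0 by (simp add: c_def)
    have Dp: "zz + c * qa > 0" using zzp c0 qa0 by (simp add: add_pos_nonneg)
    have l0: "l \<ge> 0" using Dp qa0 by (simp add: l_def)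
    have lb: "l * b < 3"
    proof -
      have "l * c < 1" using Dp zzp by (simp add: l_def field_simps)
      then show ?thesis by (simp add: c_def)
    qed
    have thr_eq: "sqrt (2 * vv * card J * a) + b * a / 3 = thr"
      by (simp add: thr_def zz_def qa_def c_def nn_def real_sqrt_mult[symmetric] mult_ac)
    have Esub: "?E \<subseteq> {y\<in>space ?N. (\<Sum>t\<in>J. f (y t)) \<ge> thr}"
      using thr_eq by auto
    have "measure ?N ?E \<le> measure ?N {y\<in>space ?N. (\<Sum>t\<in>J. f (y t)) \<ge> thr}"
      using Esub by (intro N.finite_measure_mono sets_N J) auto
    also have "\<dots> \<le> exp (- l * thr) * (\<integral>y\<in>space ?N. exp (l * (\<Sum>t\<in>J. f (y t))) \<partial>?N)"
    proof (rule N.Chernoff_ineq_ge)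
      show "l > 0" using Dp a by (simp add: l_def qa_def)
      show "set_integrable ?N (space ?N) (\<lambda>y. exp (l * (\<Sum>t\<in>J. f (y t))))"
        unfolding set_integrable_def by (rule int_N[OF J])
    qed simp
    also have "(\<integral>y\<in>space ?N. exp (l * (\<Sum>t\<in>J. f (y t))) \<partial>?N) = (\<Sum>i\<in>UNIV. pmf P i * exp (l * f i)) ^ card J"
    proof -
      have "(\<integral>y\<in>space ?N. exp (l * (\<Sum>t\<in>J. f (y t))) \<partial>?N) = (\<integral>y. (\<Prod>t\<in>J. exp (l * f (y t))) \<partial>?N)"
        by (subst set_integral_space[OF int_N[OF J]]) (simp add: sum_distrib_left exp_sum[OF J])
      also have "\<dots> = (\<Sum>i\<in>UNIV. pmf P i * exp (l * f i)) ^ card J"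
        by (rule prod_integral_N[OF J])
      finally show ?thesis .
    qed
    also have "(\<Sum>i\<in>UNIV. pmf P i * exp (l * f i)) ^ card J \<le> exp (l^2 * vv * 3 / (6 - 2*(l*b))) ^ card J"
      by (intro power_mono mgf_bound[OF _ _ m0 fb fv l0 lb]) (auto intro!: sum_nonneg simp: less_imp_le[OF pos] sum_pmf_eq_1)
    also have "exp (- l * thr) * exp (l^2 * vv * 3 / (6 - 2*(l*b))) ^ card J
        = exp (- l * thr + nn * (l^2 * vv * 3 / (6 - 2*(l*(3*c)))))"
      by (simp add: exp_of_nat_mult[symmetric] nn_def c_def mult_exp_exp)
    also have "- l * thr + nn * (l^2 * vv * 3 / (6 - 2*(l*(3*c)))) = -a"
      by (rule bern_alg[where qa = qa and zz = zz]) (use a zzp c0 qa0 vp nnp in \<open>auto simp: qa_def zz_def l_def thr_def\<close>)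
    finally show ?thesis by simp
  qed
qed
lemma cs_bound:
  fixes w s q d ab K :: real
  assumes w0: "w \<ge> 0" and s0: "s \<ge> 0" and q0: "q \<ge> 0" and dq: "\<bar>d\<bar> \<le> q"
    and qK: "q^2 = K^2 - 4* s^2" and abK: "4*ab = K^2 - d^2"
    and F: "w^2 + s^4 \<le> ab * s^2 + \<bar>d\<bar> * s * w"
  shows "w \<le> s * q"
proof (rule ccontr)
  assume "\<not> w \<le> s * q"
  then have wg: "w > s * q" by simp
  have sq0: "s * q - \<bar>d\<bar> * s \<ge> 0" using mult_right_mono[OF dq s0] by (simp add: mult.commute)
  have wp: "w > 0" using wg s0 q0 by (smt (verit) mult_nonneg_nonneg)
  have X1: "w * (w - \<bar>d\<bar> * s) > w * (s * q - \<bar>d\<bar> * s)"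
    using wg wp by (intro mult_strict_left_mono) auto
  have X2: "w * (s * q - \<bar>d\<bar> * s) \<ge> s * q * (s * q - \<bar>d\<bar> * s)"
    using wg sq0 by (intro mult_right_mono) auto
  have G0: "(3*q - \<bar>d\<bar>) * (q - \<bar>d\<bar>) \<ge> 0" using dq q0 by (intro mult_nonneg_nonneg) auto
  have G: "q^2 - \<bar>d\<bar> * q \<ge> ab - s^2"
  proof -
    have "4 * (q^2 - \<bar>d\<bar> * q - (ab - s^2)) = (3*q - \<bar>d\<bar>) * (q - \<bar>d\<bar>)"
      using qK abK by (simp add: algebra_simps power2_eq_square)
    then show ?thesis using G0 by (smt (verit))
  qed
  have G2: "s^2 * (q^2 - \<bar>d\<bar> * q) \<ge> s^2 * (ab - s^2)"
    using G by (intro mult_left_mono) auto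
  have e1: "s * q * (s * q - \<bar>d\<bar> * s) = s^2 * (q^2 - \<bar>d\<bar> * q)"
    by (simp add: algebra_simps power2_eq_square)
  have e2: "w * (w - \<bar>d\<bar> * s) = w^2 - \<bar>d\<bar> * s * w"
    by (simp add: algebra_simps power2_eq_square)
  have e3: "s^2 * (ab - s^2) = ab * s^2 - s^4"
    by (simp add: algebra_simps power2_eq_square power4_eq_xxxx)
  show False using X1 X2 G2 e1 e2 e3 F by linarith
qed
lemma mom:
  fixes p y :: "'s::finite \<Rightarrow> real"
  shows "(\<Sum>i\<in>UNIV. p i * (a0 + a1 * y i + a2 * y i^2 + a3 * y i^3 + a4 * y i^4)) =
    a0 * sum p UNIV + a1 * (\<Sum>i\<in>UNIV. p i * y i) + a2 * (\<Sum>i\<in>UNIV. p i * y i^2)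
    + a3 * (\<Sum>i\<in>UNIV. p i * y i^3) + a4 * (\<Sum>i\<in>UNIV. p i * y i^4)"
  by (simp add: sum.distrib sum_distrib_left algebra_simps)

lemma varZ:
  fixes p l :: "'s::finite \<Rightarrow> real" and K :: real
  assumes p0: "\<And>i. p i \<ge> 0" and p1: "sum p UNIV = 1" and lb: "\<And>i. \<bar>l i\<bar> \<le> K/2"
  defines "c \<equiv> (\<Sum>i\<in>UNIV. p i * l i)"
  defines "s2 \<equiv> (\<Sum>i\<in>UNIV. p i * (l i - c)^2)"
  shows "s2 \<le> K^2/4 - c^2" and "(\<Sum>i\<in>UNIV. p i * (s2 - (l i - c)^2)^2) \<le> s2 * (K^2 - 4 * s2)"
proof -
  define y where "y i = l i - c" for i
  define m3 where "m3 = (\<Sum>i\<in>UNIV. p i * y i^3)"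
  define m4 where "m4 = (\<Sum>i\<in>UNIV. p i * y i^4)"
  define v where "v = (\<Sum>i\<in>UNIV. p i * (s2 - (l i - c)^2)^2)"
  define ab where "ab = K^2/4 - c^2"
  define d where "d = -2 * c"
  have M1: "(\<Sum>i\<in>UNIV. p i * y i) = 0"
    by (simp add: y_def right_diff_distrib sum_subtractf c_def[symmetric] sum_distrib_right[symmetric] p1)
  have M2: "(\<Sum>i\<in>UNIV. p i * y i^2) = s2" by (simp add: y_def s2_def)
  have pt: "(y i + (c + K/2)) * ((K/2 - c) - y i) \<ge> 0" for i
    using lb[of i] by (auto simp: y_def abs_le_iff intro!: mult_nonneg_nonneg)
  have S1: "(\<Sum>i\<in>UNIV. p i * ((y i + (c + K/2)) * ((K/2 - c) - y i))) = ab - s2"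
  proof -
    have "(\<Sum>i\<in>UNIV. p i * ((y i + (c + K/2)) * ((K/2 - c) - y i)))
      = (\<Sum>i\<in>UNIV. p i * (ab + d * y i + (-1) * y i^2 + 0 * y i^3 + 0 * y i^4))"
      by (intro sum.cong refl arg_cong2[where f="(*)"]) (simp add: ab_def d_def algebra_simps power2_eq_square)
    also have "\<dots> = ab - s2" by (subst mom) (simp add: p1 M1 M2)
    finally show ?thesis .
  qed
  have S1': "0 \<le> (\<Sum>i\<in>UNIV. p i * ((y i + (c + K/2)) * ((K/2 - c) - y i)))"
    by (intro sum_nonneg mult_nonneg_nonneg p0 pt)
  show sab: "s2 \<le> K^2/4 - c^2" using S1 S1' by (simp add: ab_def)
  have S2: "(\<Sum>i\<in>UNIV. p i * (y i^2 * ((y i + (c + K/2)) * ((K/2 - c) - y i)))) = ab * s2 + d * m3 - m4"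
  proof -
    have "(\<Sum>i\<in>UNIV. p i * (y i^2 * ((y i + (c + K/2)) * ((K/2 - c) - y i))))
      = (\<Sum>i\<in>UNIV. p i * (0 + 0 * y i + ab * y i^2 + d * y i^3 + (-1) * y i^4))"
      by (intro sum.cong refl arg_cong2[where f="(*)"]) (simp add: ab_def d_def algebra_simps power2_eq_square power3_eq_cube power4_eq_xxxx)
    also have "\<dots> = ab * s2 + d * m3 - m4" by (subst mom) (simp add: M2 m3_def m4_def)
    finally show ?thesis .
  qed
  have S2': "0 \<le> (\<Sum>i\<in>UNIV. p i * (y i^2 * ((y i + (c + K/2)) * ((K/2 - c) - y i))))"
    using p0 pt by (intro sum_nonneg) (metis mult_nonneg_nonneg zero_le_power2)
  have vm: "v = m4 - s2^2"
  proof -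
    have "v = (\<Sum>i\<in>UNIV. p i * (s2^2 + 0 * y i + (-2 * s2) * y i^2 + 0 * y i^3 + 1 * y i^4))"
      unfolding v_def
      by (intro sum.cong refl arg_cong2[where f="(*)"]) (simp add: y_def algebra_simps power2_eq_square power4_eq_xxxx)
    also have "\<dots> = m4 - s2^2" by (subst mom, simp only: p1 M2 M1 flip: m4_def) (simp add: algebra_simps power2_eq_square)
    finally show ?thesis .
  qed
  have quad: "0 \<le> t^2 * s2 - 2 * t * m3 + v" for t
  proof -
    have "0 \<le> (\<Sum>i\<in>UNIV. p i * (t * y i - (y i^2 - s2))^2)"
      by (intro sum_nonneg mult_nonneg_nonneg p0) auto
    also have "(\<Sum>i\<in>UNIV. p i * (t * y i - (y i^2 - s2))^2)
        = (\<Sum>i\<in>UNIV. p i * (s2^2 + (2 * t * s2) * y i + (t^2 - 2 * s2) * y i^2 + (-2 * t) * y i^3 + 1 * y i^4))"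
      by (intro sum.cong refl arg_cong2[where f="(*)"]) (simp add: algebra_simps power2_eq_square power3_eq_cube power4_eq_xxxx)
    also have "\<dots> = t^2 * s2 - 2 * t * m3 + v"
      by (subst mom, simp only: p1 M2 M1 flip: m4_def m3_def) (simp add: vm algebra_simps power2_eq_square)
    finally show ?thesis .
  qed
  have s20: "s2 \<ge> 0" unfolding s2_def by (intro sum_nonneg mult_nonneg_nonneg p0) auto
  have v0: "v \<ge> 0" unfolding v_def by (intro sum_nonneg mult_nonneg_nonneg p0) auto
  have CS: "m3^2 \<le> s2 * v"
  proof (cases "s2 = 0")
    case True
    have "m3 = 0"
    proof (rule ccontr)
      assume m: "m3 \<noteq> 0"
      have "0 \<le> ((v + 1) / (2 * m3))^2 * s2 - 2 * ((v + 1) / (2 * m3)) * m3 + v" by (rule quad)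
      also have "\<dots> = -1" using m True by (simp add: field_simps)
      finally show False by simp
    qed
    then show ?thesis using True by simp
  next
    case False
    then have sp: "s2 > 0" using s20 by simp
    have "0 \<le> (m3/s2)^2 * s2 - 2 * (m3/s2) * m3 + v" by (rule quad)
    also have "\<dots> = v - m3^2 / s2" using sp by (simp add: field_simps power2_eq_square)
    finally show ?thesis using sp by (simp add: field_simps)
  qed
  define s where "s = sqrt s2"
  define w where "w = sqrt v"
  define q where "q = sqrt (K^2 - 4 * s2)"
  have ss: "s^2 = s2" using s20 by (simp add: s_def)
  have ww: "w^2 = v" using v0 by (simp add: w_def)
  have K4: "4 * s2 \<le> K^2" using sab zero_le_power2[of c] by linarith
  have qq: "q^2 = K^2 - 4 * s^2" using K4 ss by (simp add: q_def)
  have dq: "\<bar>d\<bar> \<le> q"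
  proof -
    have "d^2 \<le> K^2 - 4 * s2" using sab by (simp add: d_def power2_eq_square algebra_simps)
    then have "sqrt (d^2) \<le> q" unfolding q_def by (rule real_sqrt_le_mono)
    then show ?thesis by simp
  qed
  have m3b: "\<bar>m3\<bar> \<le> s * w"
  proof -
    have "sqrt (m3^2) \<le> sqrt (s2 * v)" using CS by (rule real_sqrt_le_mono)
    then show ?thesis by (simp add: s_def w_def real_sqrt_mult)
  qed
  have "d * m3 \<le> \<bar>d\<bar> * (s * w)"
    by (metis abs_ge_self abs_mult abs_ge_zero mult_left_mono m3b order_trans)
  then have F: "w^2 + s^4 \<le> ab * s^2 + \<bar>d\<bar> * s * w"
  proof -
    have e4: "s^4 = (s^2)^2" by (simp add: power4_eq_xxxx power2_eq_square)
    have "w^2 + s^4 = m4" using ww vm ss e4 by simp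
    also have "m4 \<le> ab * s2 + d * m3" using S2 S2' by linarith
    also have "\<dots> \<le> ab * s^2 + \<bar>d\<bar> * s * w" using \<open>d * m3 \<le> \<bar>d\<bar> * (s * w)\<close> ss by (simp add: mult.assoc)
    finally show ?thesis .
  qed
  have abK: "4 * ab = K^2 - d^2" by (simp add: ab_def d_def power2_eq_square algebra_simps)
  have "w \<le> s * q"
    by (rule cs_bound[OF _ _ _ dq qq abK F]) (use v0 s20 K4 in \<open>auto simp: w_def s_def q_def\<close>)
  then have "w^2 \<le> (s * q)^2" using w_def v0 by (intro power_mono) auto
  then show "(\<Sum>i\<in>UNIV. p i * (s2 - (l i - c)^2)^2) \<le> s2 * (K^2 - 4 * s2)"
    using ww ss qq by (simp add: v_def power_mult_distrib)
qed
lemma alg1: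
  fixes K s q r u V :: real
  assumes K0: "K \<ge> 0" and s0: "s \<ge> 0" and sK: "2 * s \<le> K" and r0: "r > 0" and q0: "q \<ge> 0"
    and qK: "q^2 \<le> K^2 - 4 * s^2" and V0: "V \<ge> 0"
    and uE: "u \<le> s * r + K * r^2 / 6"
    and VE: "V \<ge> s^2 - s * q * r - s^2 * r^2 / 6 - u^2"
  shows "u \<le> r * sqrt V + 7 * K * r^2 / 6"
proof (rule ccontr)
  assume H: "\<not> ?thesis"
  have sqV: "sqrt V \<ge> 0" using V0 by simp
  have Kr2: "7 * K * r^2 / 6 \<ge> 0" using K0 by simp
  have rsv: "r * sqrt V \<ge> 0" using r0 V0 by simp
  have u0: "u \<ge> 0" using H Kr2 rsv by linarith
  have e1: "r * (s - K * r) = s * r - 2 * (K * r^2 / 2)" by (simp add: algebra_simps power2_eq_square)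
  have "r * sqrt V < r * (s - K * r)" using H uE e1 by linarith
  then have sv: "sqrt V < s - K * r" using r0 by simp
  have Kr: "K * r < s" using sv sqV by linarith
  have Krn: "K * r \<ge> 0" using K0 r0 by simp
  have sp: "s > 0" using Kr Krn by linarith
  have Kp: "K > 0" using sp sK by linarith
  have Vl: "V < (s - K * r)^2"
  proof -
    have "(sqrt V)^2 < (s - K * r)^2" using sv sqV by (intro power_strict_mono) auto
    then show ?thesis using V0 by simp
  qed
  have ul: "u^2 \<le> (s * r + K * r^2 / 6)^2" using u0 uE by (intro power_mono) auto
  have I: "(s - K * r)^2 > s^2 - s * q * r - s^2 * r^2 / 6 - (s * r + K * r^2 / 6)^2"
    using VE Vl ul by linarith
  have eq: "r * (K^2 * r + s * q + 7/6 * s^2 * r + s * K * r^2 / 3 + K^2 * r^3 / 36 - 2 * K * s)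
     = (s - K * r)^2 - (s^2 - s * q * r - s^2 * r^2 / 6 - (s * r + K * r^2 / 6)^2)"
    by (simp add: algebra_simps power2_eq_square power3_eq_cube)
  have "r * (K^2 * r + s * q + 7/6 * s^2 * r + s * K * r^2 / 3 + K^2 * r^3 / 36 - 2 * K * s) > 0"
    using I eq by linarith
  then have I2: "K^2 * r + s * q + 7/6 * s^2 * r + s * K * r^2 / 3 + K^2 * r^3 / 36 - 2 * K * s > 0"
    using r0 by (simp add: zero_less_mult_iff)
  have rb: "r < s / K" using Kr Kp by (simp add: field_simps mult.commute)
  have qb: "q \<le> K - 2 * s^2 / K"
  proof -
    have s2K: "2 * s^2 \<le> K^2"
    proof -
      have "(2 * s)^2 \<le> K^2" using sK s0 by (intro power_mono) auto
      then have "4 * s^2 \<le> K^2" by (simp add: power_mult_distrib)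
      then show ?thesis using zero_le_power2[of s] by linarith
    qed
    have nn: "K - 2 * s^2 / K \<ge> 0"
    proof -
      have "2 * s^2 / K \<le> K^2 / K" using s2K Kp by (intro divide_right_mono) auto
      then show ?thesis by (simp add: power2_eq_square)
    qed
    have ex: "(K - 2 * s^2 / K)^2 = K^2 - 4 * s^2 + (2 * s^2 / K)^2"
      using Kp by (simp add: power2_eq_square field_simps)
    have "q^2 \<le> (K - 2 * s^2 / K)^2" using qK ex zero_le_power2[of "2 * s^2 / K"] by linarith
    then show ?thesis using nn by (rule power2_le_imp_le)
  qed
  have b1: "K^2 * r < K * s"
  proof -
    have "K * (K * r) < K * s" using Kr Kp by simp
    then show ?thesis by (simp add: power2_eq_square mult.assoc)
  qed
  have b2: "s * q \<le> K * s - 2 * s^3 / K"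
  proof -
    have "s * q \<le> s * (K - 2 * s^2 / K)" by (rule mult_left_mono[OF qb s0])
    also have "s * (K - 2 * s^2 / K) = K * s - 2 * s^3 / K"
      using Kp by (simp add: field_simps power2_eq_square power3_eq_cube)
    finally show ?thesis .
  qed
  have b3: "s^2 * r \<le> s^3 / K"
  proof -
    have "s^2 * r \<le> s^2 * (s / K)" using rb by (intro mult_left_mono) auto
    also have "\<dots> = s^3 / K" by (simp add: power2_eq_square power3_eq_cube)
    finally show ?thesis .
  qed
  have r2: "r^2 \<le> (s/K)^2" using rb r0 by (intro power_mono) auto
  have b4: "s * K * r^2 \<le> s^3 / K"
  proof -
    have "s * K * r^2 \<le> s * K * (s/K)^2" using r2 sp Kp by (intro mult_left_mono) auto
    also have "\<dots> = s^3 / K" using Kp by (simp add: power2_eq_square power3_eq_cube field_simps)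
    finally show ?thesis .
  qed
  have r3: "r^3 \<le> (s/K)^3" using rb r0 by (intro power_mono) auto
  have b5: "K^2 * r^3 \<le> s^3 / K"
  proof -
    have "K^2 * r^3 \<le> K^2 * (s/K)^3" using r3 by (intro mult_left_mono) auto
    also have "\<dots> = s^3 / K" using Kp by (simp add: power2_eq_square power3_eq_cube field_simps)
    finally show ?thesis .
  qed
  have "s^3 / K > 0" using sp Kp by simp
  then show False using I2 b1 b2 b3 b4 b5 by linarith
qed

lemma alg2:
  fixes K s q r u V Z :: real
  assumes K0: "K \<ge> 0" and s0: "s \<ge> 0" and r0: "r \<ge> 0" and qK: "q \<le> K"
    and uE: "u \<le> s * r + K * r^2 / 6"
    and VZ: "V \<le> Z" and ZE: "Z - s^2 \<le> s * q * r + K^2 * r^2 / 6" and V0: "V \<ge> 0"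
  shows "u + r * sqrt V - 2 * s * r - 7 * K * r^2 / 6 \<le> 0"
proof -
  have sr: "s * r \<ge> 0" using s0 r0 by simp
  have "s * r * q \<le> s * r * K" using qK sr by (rule mult_left_mono)
  then have b: "s * q * r \<le> s * K * r" by (simp add: mult_ac)
  have ex: "(s + K * r / 2)^2 = s^2 + s * K * r + K^2 * r^2 / 4"
    by (simp add: power2_eq_square algebra_simps)
  have "K^2 * r^2 \<ge> 0" by simp
  then have "V \<le> (s + K * r / 2)^2" using VZ ZE b ex by linarith
  then have "sqrt V \<le> s + K * r / 2" using s0 K0 r0
    by (metis real_sqrt_le_mono real_sqrt_abs abs_of_nonneg add_nonneg_nonneg divide_nonneg_nonneg mult_nonneg_nonneg zero_le_numeral)
  then have "r * sqrt V \<le> r * (s + K * r / 2)" using r0 by (rule mult_left_mono)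
  moreover have "r * (s + K * r / 2) = s * r + K * r^2 / 2" by (simp add: algebra_simps power2_eq_square)
  moreover have "K * r^2 \<ge> 0" using K0 by simp
  ultimately show ?thesis using uE by linarith
qed
lemma emp_restrict: "emp T (restrict \<omega> {1..T}) = emp T \<omega>"
  unfolding emp_def by (intro ext arg_cong2[where f="(/)"] arg_cong[where f="\<lambda>A. real (card A)"]) auto

lemma emp_nonneg: "emp T y i \<ge> 0"
  unfolding emp_def by simp

lemma sum_emp:
  fixes g :: "'s::finite \<Rightarrow> real"
  shows "(\<Sum>i\<in>UNIV. g i * emp T y i) = (\<Sum>t\<in>{1..T}. g (y t)) / real T"
proof -
  have "(\<Sum>t\<in>{1..T}. g (y t)) = (\<Sum>i\<in>UNIV. \<Sum>t\<in>{t\<in>{1..T}. y t = i}. g (y t))"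
    by (rule sum.group[symmetric]) auto
  also have "\<dots> = (\<Sum>i\<in>UNIV. g i * real (card {t\<in>{1..T}. y t = i}))"
    by (intro sum.cong refl) simp
  finally show ?thesis
    by (simp add: emp_def sum_divide_distrib[symmetric] times_divide_eq_right)
qed

lemma cost_emp: "cost L x (emp T y) = (\<Sum>t\<in>{1..T}. L x (y t)) / real T"
  unfolding cost_def by (rule sum_emp)

lemma var_emp:
  fixes L :: "'x \<Rightarrow> 's::finite \<Rightarrow> real"
  assumes T: "T \<ge> 1"
  shows "var L x (emp T y) = (\<Sum>t\<in>{1..T}. (L x (y t) - c)^2) / real T
           - ((\<Sum>t\<in>{1..T}. L x (y t)) / real T - c)^2"
proof -
  define m where "m = (\<Sum>t\<in>{1..T}. L x (y t)) / real T"
  have Tp: "real T > 0" using T by simp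
  have cm: "cost L x (emp T y) = m" by (simp add: cost_emp m_def)
  have "var L x (emp T y) = (\<Sum>i\<in>UNIV. (L x i - m)^2 * emp T y i)"
    unfolding var_def cm by (simp add: mult.commute)
  also have "\<dots> = (\<Sum>t\<in>{1..T}. (L x (y t) - m)^2) / real T" by (rule sum_emp)
  also have "(\<Sum>t\<in>{1..T}. (L x (y t) - m)^2) =
      (\<Sum>t\<in>{1..T}. (L x (y t) - c)^2) - 2 * (m - c) * (\<Sum>t\<in>{1..T}. (L x (y t) - c)) + real T * (m - c)^2"
  proof -
    have "(\<Sum>t\<in>{1..T}. (L x (y t) - m)^2) =
        (\<Sum>t\<in>{1..T}. (L x (y t) - c)^2 - 2 * (m - c) * (L x (y t) - c) + (m - c)^2)"
      by (intro sum.cong refl) (simp add: power2_eq_square algebra_simps)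
    also have "\<dots> = (\<Sum>t\<in>{1..T}. (L x (y t) - c)^2) - 2 * (m - c) * (\<Sum>t\<in>{1..T}. (L x (y t) - c)) + real T * (m - c)^2"
      by (simp only: sum.distrib sum_subtractf sum_distrib_left[symmetric] sum_constant card_atLeastAtMost) simp
    finally show ?thesis .
  qed
  also have "(\<Sum>t\<in>{1..T}. (L x (y t) - c)) = real T * (m - c)"
    using Tp by (simp add: sum_subtractf m_def algebra_simps)
  finally have v: "var L x (emp T y) = ((\<Sum>t\<in>{1..T}. (L x (y t) - c)^2) - 2 * (m - c) * (real T * (m - c)) + real T * (m - c)^2) / real T" .
  define A where "A = (\<Sum>t\<in>{1..T}. (L x (y t) - c)^2)"
  have "(A - 2 * (m - c) * (real T * (m - c)) + real T * (m - c)^2) / real T = A / real T - (m - c)^2"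
    using Tp by (simp add: field_simps power2_eq_square)
  then show ?thesis using v unfolding A_def m_def by simp
qed
lemma K_bound:
  fixes X :: "(real ^ 'n) set" and L :: "real ^ 'n \<Rightarrow> 's::finite \<Rightarrow> real"
  assumes X: "compact X" and cont: "\<And>i. continuous_on X (\<lambda>y. L y i)" and x: "x \<in> X"
  shows "\<bar>L x i\<bar> \<le> (SUP y\<in>X. Max (range (\<lambda>i. \<bar>L y i\<bar>)))"
proof -
  have "\<forall>i. \<exists>B. \<forall>y\<in>X. \<bar>L y i\<bar> \<le> B"
  proof
    fix i
    have "bounded ((\<lambda>y. L y i) ` X)" by (intro compact_imp_bounded compact_continuous_image cont X)
    then obtain B where "\<forall>z\<in>(\<lambda>y. L y i) ` X. norm z \<le> B" unfolding bounded_iff by blast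
    then show "\<exists>B. \<forall>y\<in>X. \<bar>L y i\<bar> \<le> B" by auto
  qed
  then obtain B where B: "\<And>i y. y \<in> X \<Longrightarrow> \<bar>L y i\<bar> \<le> B i" by metis
  have bdd: "bdd_above ((\<lambda>y. Max (range (\<lambda>i. \<bar>L y i\<bar>))) ` X)"
  proof (rule bdd_aboveI2)
    fix y assume y: "y \<in> X"
    show "Max (range (\<lambda>i. \<bar>L y i\<bar>)) \<le> (\<Sum>i\<in>UNIV. \<bar>B i\<bar>)"
    proof (subst Max_le_iff, simp, simp, safe)
      fix i
      have "\<bar>L y i\<bar> \<le> \<bar>B i\<bar>" using B[OF y, of i] by simp
      also have "\<bar>B i\<bar> \<le> (\<Sum>i\<in>UNIV. \<bar>B i\<bar>)" by (rule member_le_sum) auto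
      finally show "\<bar>L y i\<bar> \<le> (\<Sum>i\<in>UNIV. \<bar>B i\<bar>)" .
    qed
  qed
  have "\<bar>L x i\<bar> \<le> Max (range (\<lambda>i. \<bar>L x i\<bar>))" by (rule Max_ge) auto
  also have "\<dots> \<le> (SUP y\<in>X. Max (range (\<lambda>i. \<bar>L y i\<bar>)))" by (rule cSUP_upper[OF x bdd])
  finally show ?thesis .
qed
lemma sqrt_eq_prod:
  fixes z e :: real
  assumes "e \<ge> 0" "z = e^2"
  shows "sqrt z = e"
  using assms by simp

lemma core1:
  fixes nT a K s2 c m Zs V :: real
  assumes nT: "nT > 0" and a: "a > 0" and K0: "K \<ge> 0" and s20: "s2 \<ge> 0" and sK: "4 * s2 \<le> K^2"
    and V: "V = Zs / nT - (m - c)^2" and V0: "V \<ge> 0"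
    and h1: "nT * (c - m) \<le> sqrt (2 * s2 * nT * a) + K * a / 3"
    and h2: "nT * s2 - Zs \<le> sqrt (2 * (s2 * (K^2 - 4 * s2)) * nT * a) + s2 * a / 3"
  shows "c \<le> m + sqrt (2 * a / nT * V) + 7 * K / 3 * (a / nT)"
proof -
  define s where "s = sqrt s2"
  define q where "q = sqrt (K^2 - 4 * s2)"
  define r where "r = sqrt (2 * a / nT)"
  have s0: "s \<ge> 0" using s20 by (simp add: s_def)
  have ss: "s^2 = s2" using s20 by (simp add: s_def)
  have q0: "q \<ge> 0" using sK by (simp add: q_def)
  have qq: "q^2 = K^2 - 4 * s2" using sK by (simp add: q_def)
  have r0: "r > 0" using a nT by (simp add: r_def)
  have rr: "r^2 = 2 * a / nT" using a nT by (simp add: r_def)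
  have sK2: "2 * s \<le> K"
  proof -
    have "(2 * s)^2 \<le> K^2" using sK ss by (simp add: power_mult_distrib)
    then show ?thesis using K0 by (rule power2_le_imp_le)
  qed
  have hr1: "sqrt (2 * s2 * nT * a) = nT * (s * r)"
  proof (rule sqrt_eq_prod)
    show "0 \<le> nT * (s * r)" using nT s0 r0 by simp
    have "(nT * (s * r))^2 = nT^2 * s^2 * r^2" by (simp add: power_mult_distrib)
    also have "\<dots> = nT^2 * s2 * (2 * a / nT)" unfolding ss rr ..
    also have "\<dots> = 2 * s2 * nT * a" using nT by (simp add: power2_eq_square field_simps)
    finally show "2 * s2 * nT * a = (nT * (s * r))^2" by simp
  qed
  have hr2: "sqrt (2 * (s2 * (K^2 - 4 * s2)) * nT * a) = nT * (s * q * r)"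
  proof (rule sqrt_eq_prod)
    show "0 \<le> nT * (s * q * r)" using nT s0 r0 q0 by simp
    have "(nT * (s * q * r))^2 = nT^2 * s^2 * q^2 * r^2" by (simp add: power_mult_distrib)
    also have "\<dots> = nT^2 * s2 * (K^2 - 4 * s2) * (2 * a / nT)" unfolding ss rr qq ..
    also have "\<dots> = 2 * (s2 * (K^2 - 4 * s2)) * nT * a" using nT by (simp add: power2_eq_square field_simps)
    finally show "2 * (s2 * (K^2 - 4 * s2)) * nT * a = (nT * (s * q * r))^2" by simp
  qed
  have ka: "K * a / 3 = nT * (K * r^2 / 6)" using nT by (simp add: rr field_simps)
  have sa: "s2 * a / 3 = nT * (s^2 * r^2 / 6)" using nT by (simp add: rr ss field_simps)
  have u: "c - m \<le> s * r + K * r^2 / 6"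
  proof -
    have "nT * (c - m) \<le> nT * (s * r + K * r^2 / 6)" using h1 hr1 ka by (simp add: distrib_left)
    then show ?thesis using nT by simp
  qed
  have z: "s2 - Zs / nT \<le> s * q * r + s^2 * r^2 / 6"
  proof -
    have "nT * (s2 - Zs / nT) \<le> nT * (s * q * r + s^2 * r^2 / 6)"
      using h2 hr2 sa nT by (simp add: distrib_left right_diff_distrib)
    then show ?thesis using nT by simp
  qed
  have VE: "V \<ge> s^2 - s * q * r - s^2 * r^2 / 6 - (c - m)^2" using z V ss by (simp add: power2_commute)
  have "c - m \<le> r * sqrt V + 7 * K * r^2 / 6"
    by (rule alg1[OF K0 s0 sK2 r0 q0 _ V0 u VE]) (simp add: qq ss)
  moreover have "sqrt (2 * a / nT * V) = r * sqrt V" unfolding r_def by (rule real_sqrt_mult)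
  moreover have "7 * K * r^2 / 6 = 7 * K / 3 * (a / nT)" by (simp add: rr)
  ultimately show ?thesis by simp
qed

lemma core2:
  fixes nT a K s2 c m Zs V :: real
  assumes nT: "nT > 0" and a: "a > 0" and K0: "K \<ge> 0" and s20: "s2 \<ge> 0" and sK: "4 * s2 \<le> K^2"
    and V: "V = Zs / nT - (m - c)^2" and V0: "V \<ge> 0"
    and h1: "nT * (m - c) \<le> sqrt (2 * s2 * nT * a) + K * a / 3"
    and h2: "Zs - nT * s2 \<le> sqrt (2 * (s2 * (K^2 - 4 * s2)) * nT * a) + K^2 * a / 3"
  shows "c \<ge> m + sqrt (2 * a / nT * V) - sqrt (8 * a / nT * s2) - 7 * K / 3 * (a / nT)"
proof -
  define s where "s = sqrt s2"
  define q where "q = sqrt (K^2 - 4 * s2)"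
  define r where "r = sqrt (2 * a / nT)"
  have s0: "s \<ge> 0" using s20 by (simp add: s_def)
  have ss: "s^2 = s2" using s20 by (simp add: s_def)
  have q0: "q \<ge> 0" using sK by (simp add: q_def)
  have qq: "q^2 = K^2 - 4 * s2" using sK by (simp add: q_def)
  have r0: "r > 0" using a nT by (simp add: r_def)
  have rr: "r^2 = 2 * a / nT" using a nT by (simp add: r_def)
  have qK: "q \<le> K"
  proof -
    have "q^2 \<le> K^2" using qq s20 by simp
    then show ?thesis using K0 by (rule power2_le_imp_le)
  qed
  have hr1: "sqrt (2 * s2 * nT * a) = nT * (s * r)"
  proof (rule sqrt_eq_prod)
    show "0 \<le> nT * (s * r)" using nT s0 r0 by simp
    have "(nT * (s * r))^2 = nT^2 * s^2 * r^2" by (simp add: power_mult_distrib)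
    also have "\<dots> = nT^2 * s2 * (2 * a / nT)" unfolding ss rr ..
    also have "\<dots> = 2 * s2 * nT * a" using nT by (simp add: power2_eq_square field_simps)
    finally show "2 * s2 * nT * a = (nT * (s * r))^2" by simp
  qed
  have hr2: "sqrt (2 * (s2 * (K^2 - 4 * s2)) * nT * a) = nT * (s * q * r)"
  proof (rule sqrt_eq_prod)
    show "0 \<le> nT * (s * q * r)" using nT s0 r0 q0 by simp
    have "(nT * (s * q * r))^2 = nT^2 * s^2 * q^2 * r^2" by (simp add: power_mult_distrib)
    also have "\<dots> = nT^2 * s2 * (K^2 - 4 * s2) * (2 * a / nT)" unfolding ss rr qq ..
    also have "\<dots> = 2 * (s2 * (K^2 - 4 * s2)) * nT * a" using nT by (simp add: power2_eq_square field_simps)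
    finally show "2 * (s2 * (K^2 - 4 * s2)) * nT * a = (nT * (s * q * r))^2" by simp
  qed
  have ka: "K * a / 3 = nT * (K * r^2 / 6)" using nT by (simp add: rr field_simps)
  have ka2: "K^2 * a / 3 = nT * (K^2 * r^2 / 6)" using nT by (simp add: rr field_simps)
  have u: "m - c \<le> s * r + K * r^2 / 6"
  proof -
    have "nT * (m - c) \<le> nT * (s * r + K * r^2 / 6)" using h1 hr1 ka by (simp add: distrib_left)
    then show ?thesis using nT by simp
  qed
  have z: "Zs / nT - s^2 \<le> s * q * r + K^2 * r^2 / 6"
  proof -
    have "nT * (Zs / nT - s2) \<le> nT * (s * q * r + K^2 * r^2 / 6)"
      using h2 hr2 ka2 nT by (simp add: distrib_left right_diff_distrib)
    then show ?thesis using nT ss by simp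
  qed
  have VZ: "V \<le> Zs / nT" using V by simp
  have fin: "(m - c) + r * sqrt V - 2 * s * r - 7 * K * r^2 / 6 \<le> 0"
    by (rule alg2[OF K0 s0 _ qK u VZ z V0]) (use r0 in simp)
  have e1: "sqrt (2 * a / nT * V) = r * sqrt V" unfolding r_def by (rule real_sqrt_mult)
  have e2: "sqrt (8 * a / nT * s2) = 2 * s * r"
  proof -
    have "8 * a / nT * s2 = 4 * ((2 * a / nT) * s2)" by simp
    then have "sqrt (8 * a / nT * s2) = sqrt 4 * (sqrt (2 * a / nT) * sqrt s2)" by (simp only: real_sqrt_mult)
    then show ?thesis by (simp add: r_def s_def)
  qed
  have e3: "7 * K * r^2 / 6 = 7 * K / 3 * (a / nT)" by (simp add: rr)
  show ?thesis using fin e1 e2 e3 by simp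
qed
lemma good_prob:
  fixes P :: "'s::finite pmf" and J :: "nat set"
  assumes J: "finite J"
    and E1: "E1 \<subseteq> space (PiM J (\<lambda>_. measure_pmf P))" and E2: "E2 \<subseteq> space (PiM J (\<lambda>_. measure_pmf P))"
    and m1: "measure (PiM J (\<lambda>_. measure_pmf P)) E1 \<le> e" and m2: "measure (PiM J (\<lambda>_. measure_pmf P)) E2 \<le> e"
    and G: "\<And>y. y \<in> space (PiM J (\<lambda>_. measure_pmf P)) \<Longrightarrow> y \<notin> E1 \<Longrightarrow> y \<notin> E2 \<Longrightarrow> G y"
  shows "measure (PiM J (\<lambda>_. measure_pmf P)) {y\<in>space (PiM J (\<lambda>_. measure_pmf P)). G y} \<ge> 1 - 2 * e"
proof -
  let ?N = "PiM J (\<lambda>_. measure_pmf P)"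
  interpret N: prob_space ?N
    by (intro prob_space_PiM measure_pmf.prob_space_axioms)
  have s1: "E1 \<in> sets ?N" by (rule sets_N[OF J E1])
  have s2: "E2 \<in> sets ?N" by (rule sets_N[OF J E2])
  have sub: "space ?N - (E1 \<union> E2) \<subseteq> {y\<in>space ?N. G y}" using G by auto
  have c1: "measure ?N (space ?N - (E1 \<union> E2)) = 1 - measure ?N (E1 \<union> E2)"
    using s1 s2 by (intro N.prob_compl) auto
  have c2: "measure ?N (E1 \<union> E2) \<le> measure ?N E1 + measure ?N E2"
    using s1 s2 by (intro measure_Un_le)
  have "measure ?N (space ?N - (E1 \<union> E2)) \<ge> 1 - 2 * e" using c1 c2 m1 m2 by linarith
  also have "measure ?N (space ?N - (E1 \<union> E2)) \<le> measure ?N {y\<in>space ?N. G y}"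
    using sub by (intro N.finite_measure_mono sets_N J) auto
  finally show ?thesis .
qed

theorem mainTheorem9:
  fixes X :: "(real ^ 'n) set" and L :: "real ^ 'n \<Rightarrow> 's::finite \<Rightarrow> real"
    and x :: "real ^ 'n" and P :: "'s pmf" and a :: "nat \<Rightarrow> real" and T :: nat
  assumes "compact X"
    and "\<And>i. continuous_on X (\<lambda>y. L y i)"
    and "\<And>T. a T > 0"
    and "x \<in> X"
    and "\<And>i. pmf P i > 0"
    and "T \<ge> 1"
  defines "K \<equiv> 2 * (SUP y\<in>X. Max (range (\<lambda>i. \<bar>L y i\<bar>)))"
  shows "(measure (Pinf P) {\<omega> \<in> space (Pinf P).
           cost L x (pmf P) \<le> svp a L x (emp T \<omega>) T + 7 * K / 3 * (a T / real T)}
           \<ge> 1 - 2 * exp (- a T)) \<and>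
         (measure (Pinf P) {\<omega> \<in> space (Pinf P).
           cost L x (pmf P) \<ge> svp a L x (emp T \<omega>) T
             - sqrt (8 * a T / real T * var L x (pmf P)) - 7 * K / 3 * (a T / real T)}
           \<ge> 1 - 2 * exp (- a T))"
proof -
  note Xc = assms(1) and cont = assms(2) and apos = assms(3) and xX = assms(4) and pos = assms(5) and T1 = assms(6)
  define J where "J = {1..T}"
  define N where "N = PiM J (\<lambda>_. measure_pmf P)"
  define A where "A = a T"
  have Ap: "A > 0" using apos by (simp add: A_def)
  have J: "finite J" by (simp add: J_def)
  have cardJ: "card J = T" by (simp add: J_def)
  have nT: "real T > 0" using T1 by simp
  define c where "c = cost L x (pmf P)"
  define s2 where "s2 = var L x (pmf P)"
  have c_alt: "c = (\<Sum>i\<in>UNIV. pmf P i * L x i)" by (simp add: c_def cost_def mult.commute)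
  have s2_alt: "s2 = (\<Sum>i\<in>UNIV. pmf P i * (L x i - c)^2)" by (simp add: s2_def var_def c_def)
  have p1: "sum (pmf P) UNIV = 1" by (simp add: sum_pmf_eq_1)
  have p0: "\<And>i. pmf P i \<ge> 0" by simp
  have lb: "\<And>i. \<bar>L x i\<bar> \<le> K/2" using K_bound[OF Xc cont xX] by (simp add: K_def)
  have K0: "K \<ge> 0" using lb[of undefined] by linarith
  have vz1: "s2 \<le> K^2/4 - c^2" and vz2: "(\<Sum>i\<in>UNIV. pmf P i * (s2 - (L x i - c)^2)^2) \<le> s2 * (K^2 - 4 * s2)"
    using varZ[where p = "pmf P" and l = "L x" and K = K, OF p0 p1 lb] unfolding c_alt[symmetric] s2_alt[symmetric] by auto
  have s20: "s2 \<ge> 0" unfolding s2_alt by (intro sum_nonneg mult_nonneg_nonneg) auto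
  have sK: "4 * s2 \<le> K^2" using vz1 zero_le_power2[of c] by linarith
  have cK: "\<bar>c\<bar> \<le> K/2"
  proof -
    have "\<bar>c\<bar>^2 \<le> (K/2)^2" using vz1 s20 by (simp add: power_divide)
    then show ?thesis by (rule power2_le_imp_le) (use K0 in simp)
  qed
  have lcK: "\<bar>L x i - c\<bar> \<le> K" for i using lb[of i] cK by linarith
  define w where "w = s2 * (K^2 - 4 * s2)"
  define Sl where "Sl y = (\<Sum>t\<in>J. L x (y t))" for y :: "nat \<Rightarrow> 's"
  define Zs where "Zs y = (\<Sum>t\<in>J. (L x (y t) - c)^2)" for y :: "nat \<Rightarrow> 's"
  define E1 where "E1 = {y\<in>space N. (\<Sum>t\<in>J. c - L x (y t)) > sqrt (2 * s2 * card J * A) + K * A / 3}"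
  define E2 where "E2 = {y\<in>space N. (\<Sum>t\<in>J. s2 - (L x (y t) - c)^2) > sqrt (2 * w * card J * A) + s2 * A / 3}"
  define F1 where "F1 = {y\<in>space N. (\<Sum>t\<in>J. L x (y t) - c) > sqrt (2 * s2 * card J * A) + K * A / 3}"
  define F2 where "F2 = {y\<in>space N. (\<Sum>t\<in>J. (L x (y t) - c)^2 - s2) > sqrt (2 * w * card J * A) + K^2 * A / 3}"
  have mE1: "measure N E1 \<le> exp (-A)" unfolding E1_def N_def
  proof (rule bernstein_N[OF J pos _ _ _ Ap])
    show "(\<Sum>i\<in>UNIV. pmf P i * (c - L x i)) = 0"
      by (simp add: right_diff_distrib sum_subtractf sum_distrib_right[symmetric] p1 c_alt[symmetric])
    show "c - L x i \<le> K" for i using lb[of i] cK by linarith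
    show "(\<Sum>i\<in>UNIV. pmf P i * (c - L x i)^2) \<le> s2" by (simp add: s2_alt power2_commute)
  qed
  have mE2: "measure N E2 \<le> exp (-A)" unfolding E2_def N_def
  proof (rule bernstein_N[OF J pos _ _ _ Ap])
    show "(\<Sum>i\<in>UNIV. pmf P i * (s2 - (L x i - c)^2)) = 0"
      by (simp add: right_diff_distrib sum_subtractf sum_distrib_right[symmetric] p1 s2_alt[symmetric])
    show "s2 - (L x i - c)^2 \<le> s2" for i by simp
    show "(\<Sum>i\<in>UNIV. pmf P i * (s2 - (L x i - c)^2)^2) \<le> w" using vz2 by (simp add: w_def)
  qed
  have mF1: "measure N F1 \<le> exp (-A)" unfolding F1_def N_def
  proof (rule bernstein_N[OF J pos _ _ _ Ap])
    show "(\<Sum>i\<in>UNIV. pmf P i * (L x i - c)) = 0"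
      by (simp add: right_diff_distrib sum_subtractf sum_distrib_right[symmetric] p1 c_alt[symmetric])
    show "L x i - c \<le> K" for i using lb[of i] cK by linarith
    show "(\<Sum>i\<in>UNIV. pmf P i * (L x i - c)^2) \<le> s2" by (simp add: s2_alt)
  qed
  have mF2: "measure N F2 \<le> exp (-A)" unfolding F2_def N_def
  proof (rule bernstein_N[OF J pos _ _ _ Ap])
    show "(\<Sum>i\<in>UNIV. pmf P i * ((L x i - c)^2 - s2)) = 0"
      by (simp add: right_diff_distrib sum_subtractf sum_distrib_right[symmetric] p1 s2_alt[symmetric])
    show "(L x i - c)^2 - s2 \<le> K^2" for i
    proof -
      have "(L x i - c)^2 \<le> K^2"
        using lcK[of i] K0 by (metis abs_le_square_iff abs_of_nonneg)
      then show ?thesis using s20 by linarith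
    qed
    show "(\<Sum>i\<in>UNIV. pmf P i * ((L x i - c)^2 - s2)^2) \<le> w" using vz2 by (simp add: w_def power2_commute)
  qed
  have cost_y: "cost L x (emp T y) = Sl y / real T" for y by (simp add: cost_emp Sl_def J_def)
  have var_y: "var L x (emp T y) = Zs y / real T - (Sl y / real T - c)^2" for y
    using var_emp[OF T1, of L x y c] by (simp add: Zs_def Sl_def J_def)
  have var0: "var L x (emp T y) \<ge> 0" for y
    unfolding var_def by (intro sum_nonneg mult_nonneg_nonneg emp_nonneg) auto
  have svp_y: "svp a L x (emp T y) T = Sl y / real T + sqrt (2 * A / real T * var L x (emp T y))" for y
    by (simp add: svp_def cost_y A_def)
  have sumE1: "(\<Sum>t\<in>J. c - L x (y t)) = real T * (c - Sl y / real T)" for y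
    using nT by (simp add: sum_subtractf Sl_def cardJ algebra_simps)
  have sumF1: "(\<Sum>t\<in>J. L x (y t) - c) = real T * (Sl y / real T - c)" for y
    using nT by (simp add: sum_subtractf Sl_def cardJ algebra_simps)
  have sumE2: "(\<Sum>t\<in>J. s2 - (L x (y t) - c)^2) = real T * s2 - Zs y" for y
    by (simp add: sum_subtractf Zs_def cardJ)
  have sumF2: "(\<Sum>t\<in>J. (L x (y t) - c)^2 - s2) = Zs y - real T * s2" for y
    by (simp add: sum_subtractf Zs_def cardJ)
  have G1: "c \<le> svp a L x (emp T y) T + 7 * K / 3 * (A / real T)"
    if "y \<in> space N" "y \<notin> E1" "y \<notin> E2" for y
  proof -
    have h1: "real T * (c - Sl y / real T) \<le> sqrt (2 * s2 * real T * A) + K * A / 3"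
      using that sumE1[of y] by (simp add: E1_def cardJ not_less)
    have h2: "real T * s2 - Zs y \<le> sqrt (2 * (s2 * (K^2 - 4 * s2)) * real T * A) + s2 * A / 3"
      using that sumE2[of y] by (simp add: E2_def cardJ not_less w_def)
    show ?thesis
      unfolding svp_y
      by (rule core1[OF nT Ap K0 s20 sK var_y var0 h1 h2])
  qed
  have G2: "c \<ge> svp a L x (emp T y) T - sqrt (8 * A / real T * s2) - 7 * K / 3 * (A / real T)"
    if "y \<in> space N" "y \<notin> F1" "y \<notin> F2" for y
  proof -
    have h1: "real T * (Sl y / real T - c) \<le> sqrt (2 * s2 * real T * A) + K * A / 3"
      using that sumF1[of y] by (simp add: F1_def cardJ not_less)
    have h2: "Zs y - real T * s2 \<le> sqrt (2 * (s2 * (K^2 - 4 * s2)) * real T * A) + K^2 * A / 3"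
      using that sumF2[of y] by (simp add: F2_def cardJ not_less w_def)
    show ?thesis
      unfolding svp_y
      by (rule core2[OF nT Ap K0 s20 sK var_y var0 h1 h2])
  qed
  have tr: "measure (Pinf P) {\<omega> \<in> space (Pinf P). Q (emp T \<omega>)} = measure N {y\<in>space N. Q (emp T y)}" for Q
  proof -
    have "{\<omega> \<in> space (Pinf P). Q (emp T \<omega>)} = {\<omega> \<in> space (Pinf P). Q (emp T (restrict \<omega> J))}"
      by (simp only: emp_restrict J_def)
    then show ?thesis unfolding N_def
      using transfer_N[OF J, where R = "\<lambda>y. Q (emp T y)" and P = P] by simp
  qed
  have E1s: "E1 \<subseteq> space N" "E2 \<subseteq> space N" "F1 \<subseteq> space N" "F2 \<subseteq> space N"
    unfolding E1_def E2_def F1_def F2_def by auto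
  have P1: "measure N {y\<in>space N. c \<le> svp a L x (emp T y) T + 7 * K / 3 * (A / real T)} \<ge> 1 - 2 * exp (-A)"
    by (rule good_prob[where J = J and P = P, folded N_def, OF J E1s(1) E1s(2) mE1 mE2]) (rule G1)
  have P2: "measure N {y\<in>space N. c \<ge> svp a L x (emp T y) T - sqrt (8 * A / real T * s2) - 7 * K / 3 * (A / real T)} \<ge> 1 - 2 * exp (-A)"
    by (rule good_prob[where J = J and P = P, folded N_def, OF J E1s(3) E1s(4) mF1 mF2]) (rule G2)
  have Q1: "measure (Pinf P) {\<omega> \<in> space (Pinf P). cost L x (pmf P) \<le> svp a L x (emp T \<omega>) T + 7 * K / 3 * (a T / real T)}
      = measure N {y\<in>space N. c \<le> svp a L x (emp T y) T + 7 * K / 3 * (A / real T)}"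
    unfolding c_def A_def by (rule tr[of "\<lambda>e. cost L x (pmf P) \<le> svp a L x e T + 7 * K / 3 * (a T / real T)"])
  have Q2: "measure (Pinf P) {\<omega> \<in> space (Pinf P). cost L x (pmf P) \<ge> svp a L x (emp T \<omega>) T
             - sqrt (8 * a T / real T * var L x (pmf P)) - 7 * K / 3 * (a T / real T)}
      = measure N {y\<in>space N. c \<ge> svp a L x (emp T y) T - sqrt (8 * A / real T * s2) - 7 * K / 3 * (A / real T)}"
    unfolding c_def A_def s2_def
    by (rule tr[of "\<lambda>e. cost L x (pmf P) \<ge> svp a L x e T - sqrt (8 * a T / real T * var L x (pmf P)) - 7 * K / 3 * (a T / real T)"])
  have ea: "exp (-A) = exp (- a T)" by (simp add: A_def)
  show ?thesis
    unfolding Q1 Q2 using P1 P2 unfolding ea by (rule conjI)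
qed
end
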